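(* Let $U\subset\mathbb{R}^m$ be open and let $L=\{u\in\mathcal{DM}_\infty(U)\cap C_\infty(U;\mathbb R^m):\operatorname{div}u\in L_1(U)\cap C_b(U)\}$. For $f\in L_1(U)$ put $$|f|_{BF(U)}=\sup\Big\{\int_U f\,\operatorname{div}u\,\mathrm dx: u\in L,\ \|u\|_\infty\le1\Big\}.$$ If $(f_\alpha)$ is a net in $L_1(U)$ converging to $f\in L_1(U)$ in $L_1(V)$ for every bounded subset $V\subset U$, then $|f|_{BF(U)}\le\liminf_\alpha|f_\alpha|_{BF(U)}$.
   Context: $\mathcal{DM}_\infty(U)=\{u\in L_\infty(U;\mathbb{R}^m):\operatorname{div}u \text{ is a finite signed Radon measure on } U\}$ (distributional divergence). $C_b(U)$ denotes bounded continuous functions. *)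

theory Defs
  imports "HOL-Analysis.Analysis"
begin

fun Ck_on :: "nat \<Rightarrow> 'a::euclidean_space set \<Rightarrow> ('a \<Rightarrow> 'b::real_normed_vector) \<Rightarrow> bool" where
  "Ck_on 0 U g = continuous_on U g"
| "Ck_on (Suc k) U g = ((\<forall>x\<in>U. g differentiable (at x)) \<and>
      (\<forall>b\<in>Basis. Ck_on k U (\<lambda>x. frechet_derivative g (at x) b)))"

definition smooth_on :: "'a::euclidean_space set \<Rightarrow> ('a \<Rightarrow> 'b::real_normed_vector) \<Rightarrow> bool" where
  "smooth_on U g \<longleftrightarrow> (\<forall>k. Ck_on k U g)"

definition divergence :: "('a::euclidean_space \<Rightarrow> 'a) \<Rightarrow> 'a \<Rightarrow> real" where
  "divergence u x = (\<Sum>b\<in>Basis. frechet_derivative u (at x) b \<bullet> b)"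

definition test_fun :: "'a::euclidean_space set \<Rightarrow> ('a \<Rightarrow> real) \<Rightarrow> bool" where
  "test_fun U \<phi> \<longleftrightarrow> smooth_on UNIV \<phi> \<and> compact (closure {x. \<phi> x \<noteq> 0}) \<and>
      closure {x. \<phi> x \<noteq> 0} \<subseteq> U"

text \<open>DM_infinity(U): essentially bounded measurable fields whose distributional divergence is a
  finite signed Radon measure on U (written as a difference of two finite Borel measures on U;
  finite Borel measures on open subsets of R^m are Radon).\<close>
definition DM_inf :: "'a::euclidean_space set \<Rightarrow> ('a \<Rightarrow> 'a) \<Rightarrow> bool" where
  "DM_inf U u \<longleftrightarrow>
     u \<in> borel_measurable (restrict_space lebesgue U) \<and>
     (\<exists>C. AE x in lebesgue. x \<in> U \<longrightarrow> norm (u x) \<le> C) \<and>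
     (\<exists>\<mu> \<nu>. finite_measure \<mu> \<and> finite_measure \<nu> \<and>
        sets \<mu> = sets (restrict_space borel U) \<and> sets \<nu> = sets (restrict_space borel U) \<and>
        (\<forall>\<phi>. test_fun U \<phi> \<longrightarrow>
           (LINT x:U|lebesgue. frechet_derivative \<phi> (at x) (u x))
             = - ((\<integral>x. \<phi> x \<partial>\<mu>) - (\<integral>x. \<phi> x \<partial>\<nu>))))"

definition L_fields :: "'a::euclidean_space set \<Rightarrow> ('a \<Rightarrow> 'a) set" where
  "L_fields U = {u. DM_inf U u \<and> smooth_on U u \<and>
      set_integrable lebesgue U (divergence u) \<and>
      continuous_on U (divergence u) \<and> bounded (divergence u ` U)}"

text \<open>The BF(U) seminorm (value in extended reals, may be infinite).
  For continuous u, the L-infinity norm on the open set U is the pointwise supremum.\<close>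
definition BF_norm :: "'a::euclidean_space set \<Rightarrow> ('a \<Rightarrow> real) \<Rightarrow> ereal" where
  "BF_norm U f = (SUP u\<in>{u\<in>L_fields U. \<forall>x\<in>U. norm (u x) \<le> 1}.
                    ereal (LINT x:U|lebesgue. f x * divergence u x))"

definition directed_set :: "'i set \<Rightarrow> ('i \<Rightarrow> 'i \<Rightarrow> bool) \<Rightarrow> bool" where
  "directed_set I R \<longleftrightarrow> I \<noteq> {} \<and> (\<forall>a\<in>I. R a a) \<and>
     (\<forall>a\<in>I. \<forall>b\<in>I. \<forall>c\<in>I. R a b \<longrightarrow> R b c \<longrightarrow> R a c) \<and>
     (\<forall>a\<in>I. \<forall>b\<in>I. \<exists>c\<in>I. R a c \<and> R b c)"

definition net_liminf :: "'i set \<Rightarrow> ('i \<Rightarrow> 'i \<Rightarrow> bool) \<Rightarrow> ('i \<Rightarrow> ereal) \<Rightarrow> ereal" where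
  "net_liminf I R x = (SUP a\<in>I. INF b\<in>{b\<in>I. R a b}. x b)"

end

theory Submission
  imports Defs "HOL-Computational_Algebra.Polynomial"
begin
lemma Ck_mono: "Ck_on (Suc k) U g \<Longrightarrow> Ck_on k U g"
proof (induction k arbitrary: g)
  case 0
  then show ?case
    by (auto intro!: continuous_at_imp_continuous_on differentiable_imp_continuous_within)
next
  case (Suc k)
  then show ?case by simp
qed

lemma Ck_UNIV_subset: "Ck_on k UNIV g \<Longrightarrow> Ck_on k U g"
proof (induction k arbitrary: g)
  case 0
  then show ?case by (auto intro: continuous_on_subset)
next
  case (Suc k)
  then show ?case by simp
qed

lemma Ck_cong: "open U \<Longrightarrow> (\<And>x. x\<in>U \<Longrightarrow> g x = h x) \<Longrightarrow> Ck_on k U g \<Longrightarrow> Ck_on k U h"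
proof (induction k arbitrary: g h)
  case 0
  then show ?case using continuous_on_cong by auto
next
  case (Suc k)
  note oU = \<open>open U\<close> and eq = Suc.prems(2) and gk = Suc.prems(3)
  have gd: "g differentiable at x" if "x \<in> U" for x
    using gk that by simp
  have d: "h differentiable at x" if "x \<in> U" for x
    using has_derivative_transform_within_open[of g "frechet_derivative g (at x)" x UNIV U h] gd[OF that] oU that eq
    by (metis differentiableI frechet_derivative_works)
  have fd: "frechet_derivative g (at x) = frechet_derivative h (at x)" if "x \<in> U" for x
    by (rule frechet_derivative_transform_within_open[where X=U, OF gd[OF that] oU that eq])
  show ?case unfolding Ck_on.simps
  proof (intro conjI ballI)
    fix x assume "x \<in> U"
    then show "h differentiable at x" by (rule d)
  next
    fix b :: 'a assume b: "b \<in> Basis"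
    show "Ck_on k U (\<lambda>x. frechet_derivative h (at x) b)"
    proof (rule Suc.IH[of "\<lambda>x. frechet_derivative g (at x) b"])
      show "open U" by fact
      show "Ck_on k U (\<lambda>x. frechet_derivative g (at x) b)" using gk b by simp
      fix x assume "x \<in> U"
      then show "frechet_derivative g (at x) b = frechet_derivative h (at x) b" using fd by simp
    qed
  qed
qed

lemma Ck_const: "Ck_on k U (\<lambda>x. c)"
proof (induction k arbitrary: c)
  case 0
  then show ?case by simp
next
  case (Suc k)
  then show ?case by simp
qed

lemma Ck_add:
  assumes "open U" "Ck_on k U g" "Ck_on k U h"
  shows "Ck_on k U (\<lambda>x. g x + h x)"
  using assms
proof (induction k arbitrary: g h)
  case 0
  then show ?case by (auto intro: continuous_on_add)
next
  case (Suc k)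
  have fd: "frechet_derivative (\<lambda>x. g x + h x) (at x) b =
      frechet_derivative g (at x) b + frechet_derivative h (at x) b" if "x \<in> U" for x b
  proof -
    have "((\<lambda>x. g x + h x) has_derivative (\<lambda>v. frechet_derivative g (at x) v + frechet_derivative h (at x) v)) (at x)"
      using Suc.prems that by (intro has_derivative_add) (auto simp: frechet_derivative_works[symmetric])
    then show ?thesis by (metis frechet_derivative_at)
  qed
  show ?case unfolding Ck_on.simps
  proof (intro conjI ballI)
    fix x assume "x \<in> U"
    then show "(\<lambda>x. g x + h x) differentiable at x" using Suc.prems by (auto intro: differentiable_add)
  next
    fix b :: 'a assume b: "b \<in> Basis"
    have "Ck_on k U (\<lambda>x. frechet_derivative g (at x) b + frechet_derivative h (at x) b)"
      by (rule Suc.IH) (use Suc.prems b in auto)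
    then show "Ck_on k U (\<lambda>x. frechet_derivative (\<lambda>x. g x + h x) (at x) b)"
      by (rule Ck_cong[OF \<open>open U\<close>, rotated]) (simp add: fd)
  qed
qed

lemma Ck_scaleR:
  assumes "open U" "Ck_on k U \<psi>" "Ck_on k U u"
  shows "Ck_on k U (\<lambda>x. \<psi> x *\<^sub>R u x)"
  using assms
proof (induction k arbitrary: \<psi> u)
  case 0
  then show ?case by (auto intro: continuous_on_scaleR)
next
  case (Suc k)
  note oU = \<open>open U\<close> and p = Suc.prems(2) and q = Suc.prems(3)
  have fd: "frechet_derivative (\<lambda>x. \<psi> x *\<^sub>R u x) (at x) b =
      \<psi> x *\<^sub>R frechet_derivative u (at x) b + frechet_derivative \<psi> (at x) b *\<^sub>R u x" if "x \<in> U" for x b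
  proof -
    have a1: "(\<psi> has_derivative frechet_derivative \<psi> (at x)) (at x)"
      using p that by (simp add: frechet_derivative_works[symmetric])
    have a2: "(u has_derivative frechet_derivative u (at x)) (at x)"
      using q that by (simp add: frechet_derivative_works[symmetric])
    have "((\<lambda>x. \<psi> x *\<^sub>R u x) has_derivative (\<lambda>v. \<psi> x *\<^sub>R frechet_derivative u (at x) v + frechet_derivative \<psi> (at x) v *\<^sub>R u x)) (at x)"
      by (rule has_derivative_scaleR[OF a1 a2])
    then have "(\<lambda>v. \<psi> x *\<^sub>R frechet_derivative u (at x) v + frechet_derivative \<psi> (at x) v *\<^sub>R u x) = frechet_derivative (\<lambda>x. \<psi> x *\<^sub>R u x) (at x)"
      by (rule frechet_derivative_at)
    from fun_cong[OF this, of b] show ?thesis by simp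
  qed
  have k1: "Ck_on k U \<psi>" "Ck_on k U u" by (rule Ck_mono[OF p], rule Ck_mono[OF q])
  show ?case unfolding Ck_on.simps
  proof (intro conjI ballI)
    fix x assume "x \<in> U"
    then show "(\<lambda>x. \<psi> x *\<^sub>R u x) differentiable at x" using p q by (simp add: differentiable_scaleR)
  next
    fix b :: 'a assume b: "b \<in> Basis"
    have c1: "Ck_on k U (\<lambda>x. frechet_derivative u (at x) b)" using q b by simp
    have c2: "Ck_on k U (\<lambda>x. frechet_derivative \<psi> (at x) b)" using p b by simp
    have "Ck_on k U (\<lambda>x. \<psi> x *\<^sub>R frechet_derivative u (at x) b + frechet_derivative \<psi> (at x) b *\<^sub>R u x)"
      by (intro Ck_add[OF oU] Suc.IH[OF oU] k1 c1 c2)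
    then show "Ck_on k U (\<lambda>x. frechet_derivative (\<lambda>x. \<psi> x *\<^sub>R u x) (at x) b)"
      by (rule Ck_cong[OF oU, rotated]) (simp add: fd)
  qed
qed

lemma Ck_linear:
  assumes "bounded_linear f"
  shows "Ck_on k U f"
proof (cases k)
  case 0
  then show ?thesis using assms by (auto intro: linear_continuous_on)
next
  case (Suc n)
  have "frechet_derivative f (at x) = f" for x
    using assms by (metis bounded_linear_imp_has_derivative frechet_derivative_at)
  then show ?thesis using Suc assms
    by (auto simp: Ck_const intro: bounded_linear_imp_differentiable)
qed

definition rsmooth :: "(nat \<Rightarrow> real \<Rightarrow> real) \<Rightarrow> bool" where
  "rsmooth D \<longleftrightarrow> (\<forall>n t. (D n has_real_derivative D (Suc n) t) (at t))"

lemma rsmooth_shift: "rsmooth D \<Longrightarrow> rsmooth (\<lambda>n. D (Suc n))"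
  unfolding rsmooth_def by auto

lemma radial_deriv:
  fixes x :: "'a::euclidean_space"
  assumes "rsmooth D"
  shows "((\<lambda>x. D 0 (c * (x \<bullet> x))) has_derivative (\<lambda>h. (c * (2 * (x \<bullet> h))) * D 1 (c * (x \<bullet> x)))) (at x)"
proof -
  have i: "((\<lambda>x. c * (x \<bullet> x)) has_derivative (\<lambda>h. c * (2 * (x \<bullet> h)))) (at x)"
  proof -
    have "((\<lambda>x. x \<bullet> x) has_derivative (\<lambda>h. x \<bullet> h + h \<bullet> x)) (at x)"
      by (rule has_derivative_inner[OF has_derivative_ident has_derivative_ident])
    then have "((\<lambda>x. c * (x \<bullet> x)) has_derivative (\<lambda>h. c * (x \<bullet> h + h \<bullet> x))) (at x)"
      by (rule has_derivative_mult_right)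
    then show ?thesis by (simp add: inner_commute)
  qed
  have "(D 0 has_real_derivative D 1 (c * (x \<bullet> x))) (at (c * (x \<bullet> x)))"
    using assms unfolding rsmooth_def by simp
  from DERIV_compose_FDERIV[OF this i] show ?thesis .
qed

lemma Ck_radial:
  assumes "rsmooth D"
  shows "Ck_on k (UNIV::'a::euclidean_space set) (\<lambda>x. D 0 (c * (x \<bullet> x)))"
  using assms
proof (induction k arbitrary: D)
  case 0
  have "isCont (\<lambda>x::'a. D 0 (c * (x \<bullet> x))) x" for x
    using radial_deriv[OF 0, of c x] has_derivative_continuous by blast
  then show ?case by (simp add: continuous_at_imp_continuous_on)
next
  case (Suc k)
  have fd: "frechet_derivative (\<lambda>x::'a. D 0 (c * (x \<bullet> x))) (at x) b =
      (2 * c * (x \<bullet> b)) *\<^sub>R D (Suc 0) (c * (x \<bullet> x))" for x b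
  proof -
    have "(\<lambda>h. (c * (2 * (x \<bullet> h))) * D 1 (c * (x \<bullet> x))) = frechet_derivative (\<lambda>x::'a. D 0 (c * (x \<bullet> x))) (at x)"
      by (rule frechet_derivative_at[OF radial_deriv[OF Suc.prems]])
    from fun_cong[OF this, of b] show ?thesis by simp
  qed
  show ?case unfolding Ck_on.simps
  proof (intro conjI ballI)
    fix x :: 'a
    show "(\<lambda>x. D 0 (c * (x \<bullet> x))) differentiable at x"
      using radial_deriv[OF Suc.prems, of c x] by (rule differentiableI)
  next
    fix b :: 'a assume b: "b \<in> Basis"
    have l: "Ck_on k UNIV (\<lambda>x::'a. 2 * c * (x \<bullet> b))"
      by (rule Ck_linear) (intro bounded_linear_const_mult bounded_linear_inner_left)
    have "Ck_on k UNIV (\<lambda>x::'a. (2 * c * (x \<bullet> b)) *\<^sub>R D (Suc 0) (c * (x \<bullet> x)))"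
      by (rule Ck_scaleR[OF open_UNIV l Suc.IH[OF rsmooth_shift[OF Suc.prems]]])
    then show "Ck_on k UNIV (\<lambda>x. frechet_derivative (\<lambda>x. D 0 (c * (x \<bullet> x))) (at x) b)"
      by (simp add: fd)
  qed
qed

primrec Pn :: "nat \<Rightarrow> real poly" where
  "Pn 0 = 1"
| "Pn (Suc n) = [:0,0,1:] * (Pn n - pderiv (Pn n))"

definition Ed :: "nat \<Rightarrow> real \<Rightarrow> real" where
  "Ed n t = (if 0 < t then poly (Pn n) (inverse t) * exp (- inverse t) else 0)"

lemma poly_exp_lim: "((\<lambda>s. poly p s * exp (-s)) \<longlongrightarrow> (0::real)) at_top"
proof -
  have eq: "poly p s * exp (-s) = (\<Sum>i\<le>degree p. coeff p i * (s ^ i / exp s))" for s :: real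
  proof -
    have "poly p s * exp (-s) = (\<Sum>i\<le>degree p. coeff p i * s ^ i) / exp s"
      by (simp add: poly_altdef exp_minus divide_inverse)
    also have "\<dots> = (\<Sum>i\<le>degree p. coeff p i * (s ^ i / exp s))"
      by (simp add: sum_divide_distrib)
    finally show ?thesis .
  qed
  have "((\<lambda>s. \<Sum>i\<le>degree p. coeff p i * (s ^ i / exp s)) \<longlongrightarrow> (0::real)) at_top"
    by (intro tendsto_null_sum tendsto_mult_right_zero tendsto_power_div_exp_0)
  then show ?thesis by (simp add: eq)
qed

lemma Ed_lim: "((\<lambda>t. poly p (inverse t) * exp (- inverse t)) \<longlongrightarrow> (0::real)) (at_right 0)"
  using filterlim_compose[OF poly_exp_lim filterlim_inverse_at_top_right] by simp

lemma Ed_deriv_pos: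
  assumes "0 < t"
  shows "((\<lambda>t. poly p (inverse t) * exp (- inverse t)) has_real_derivative
      poly ([:0,0,1:] * (p - pderiv p)) (inverse t) * exp (- inverse t)) (at t)"
proof -
  have t0: "t \<noteq> 0" using assms by simp
  have d1: "((\<lambda>t. poly p (inverse t)) has_real_derivative poly (pderiv p) (inverse t) * (- (inverse t ^ Suc (Suc 0)))) (at t)"
    by (rule DERIV_chain2[OF poly_DERIV DERIV_inverse[OF t0]])
  have d2: "((\<lambda>t. exp (- inverse t)) has_real_derivative exp (- inverse t) * (- (- (inverse t ^ Suc (Suc 0))))) (at t)"
    by (rule DERIV_chain2[OF DERIV_exp DERIV_minus[OF DERIV_inverse[OF t0]]])
  have "((\<lambda>t. poly p (inverse t) * exp (- inverse t)) has_real_derivative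
      poly (pderiv p) (inverse t) * (- (inverse t ^ Suc (Suc 0))) * exp (- inverse t) +
      (exp (- inverse t) * (- (- (inverse t ^ Suc (Suc 0))))) * poly p (inverse t)) (at t)"
    by (rule DERIV_mult[OF d1 d2])
  moreover have "poly (pderiv p) (inverse t) * (- (inverse t ^ Suc (Suc 0))) * exp (- inverse t) +
      (exp (- inverse t) * (- (- (inverse t ^ Suc (Suc 0))))) * poly p (inverse t) =
      poly ([:0,0,1:] * (p - pderiv p)) (inverse t) * exp (- inverse t)"
    by (simp add: algebra_simps power2_eq_square)
  ultimately show ?thesis by simp
qed

lemma Ed_deriv: "(Ed n has_real_derivative Ed (Suc n) t) (at t)"
proof (cases "0 < t")
  case True
  have "((\<lambda>t. poly (Pn n) (inverse t) * exp (- inverse t)) has_real_derivative Ed (Suc n) t) (at t)"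
    using Ed_deriv_pos[OF True, of "Pn n"] True by (simp add: Ed_def)
  then show ?thesis
    by (rule has_field_derivative_transform_within_open[where S="{0<..}"]) (use True in \<open>auto simp: Ed_def\<close>)
next
  case False
  show ?thesis
  proof (cases "t < 0")
    case True
    have "((\<lambda>t. 0) has_real_derivative Ed (Suc n) t) (at t)"
      using True by (simp add: Ed_def)
    then show ?thesis
      by (rule has_field_derivative_transform_within_open[where S="{..<0}"]) (use True in \<open>auto simp: Ed_def\<close>)
  next
    case False2: False
    then have t: "t = 0" using False by simp
    have "((\<lambda>y. (Ed n y - Ed n 0) / (y - 0)) \<longlongrightarrow> 0) (at 0)"
      unfolding filterlim_at_split
    proof
      have "\<forall>\<^sub>F y in at_left (0::real). 0 = (Ed n y - Ed n 0) / (y - 0)"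
      proof -
        have "eventually (\<lambda>y. y \<in> {-1<..<0}) (at_left (0::real))"
          by (rule eventually_at_left_real) simp
        then show ?thesis by eventually_elim (simp add: Ed_def)
      qed
      then show "((\<lambda>y. (Ed n y - Ed n 0) / (y - 0)) \<longlongrightarrow> 0) (at_left 0)"
        by (rule Lim_transform_eventually[OF tendsto_const])
    next
      have "\<forall>\<^sub>F y in at_right (0::real). poly (pCons 0 (Pn n)) (inverse y) * exp (- inverse y) = (Ed n y - Ed n 0) / (y - 0)"
        using eventually_at_right_less[of 0] by eventually_elim (simp add: Ed_def field_simps)
      then show "((\<lambda>y. (Ed n y - Ed n 0) / (y - 0)) \<longlongrightarrow> 0) (at_right 0)"
        by (rule Lim_transform_eventually[OF Ed_lim])
    qed
    then have "(Ed n has_real_derivative 0) (at 0)"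
      by (simp add: has_field_derivative_iff)
    then show ?thesis using t by (simp add: Ed_def)
  qed
qed

definition Dc :: "nat \<Rightarrow> real \<Rightarrow> real" where
  "Dc n s = (-1) ^ n * exp 1 * Ed n (1 - s)"

lemma rsmooth_Dc: "rsmooth Dc"
  unfolding rsmooth_def
proof (intro allI)
  fix n t
  have "((\<lambda>s. Ed n (1 - s)) has_real_derivative Ed (Suc n) (1 - t) * (- 1)) (at t)"
    by (rule DERIV_chain2[OF Ed_deriv]) (auto intro!: derivative_eq_intros)
  then have "((\<lambda>s. (-1) ^ n * exp 1 * Ed n (1 - s)) has_real_derivative (-1) ^ n * exp 1 * (Ed (Suc n) (1 - t) * (- 1))) (at t)"
    by (rule DERIV_cmult)
  then show "(Dc n has_real_derivative Dc (Suc n) t) (at t)"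
    unfolding Dc_def by (simp add: algebra_simps)
qed

lemma Dc_zero: "1 \<le> s \<Longrightarrow> Dc n s = 0"
  by (simp add: Dc_def Ed_def)

lemma Dc0_at0: "Dc 0 0 = 1"
  by (simp add: Dc_def Ed_def exp_minus)

lemma Dc0_bounds: "0 \<le> s \<Longrightarrow> 0 \<le> Dc 0 s \<and> Dc 0 s \<le> 1"
proof -
  assume s: "0 \<le> s"
  show ?thesis
  proof (cases "s < 1")
    case True
    have "1 \<le> inverse (1 - s)" using s True by (intro one_le_inverse) auto
    then have "exp (1 - inverse (1 - s)) \<le> exp 0" by simp
    then show ?thesis using True by (simp add: Dc_def Ed_def exp_diff exp_minus field_simps)
  next
    case False
    then show ?thesis by (simp add: Dc_zero)
  qed
qed

lemma Dc_cont: "isCont (Dc n) s"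
  using rsmooth_Dc unfolding rsmooth_def by (meson DERIV_isCont)

lemma Dc1_bound: "\<exists>B. \<forall>s. 0 \<le> s \<longrightarrow> \<bar>Dc 1 s\<bar> \<le> B"
proof -
  have "continuous_on {0..1} (Dc 1)"
    by (simp add: Dc_cont continuous_at_imp_continuous_on)
  then have "bounded (Dc 1 ` {0..1})"
    by (intro compact_imp_bounded compact_continuous_image) auto
  then obtain B where B: "\<And>y. y \<in> Dc 1 ` {0..1} \<Longrightarrow> norm y \<le> B"
    unfolding bounded_iff by auto
  have "\<bar>Dc 1 s\<bar> \<le> B" if "0 \<le> s" for s
  proof (cases "s \<le> 1")
    case True
    then show ?thesis using B[of "Dc 1 s"] that by auto
  next
    case False
    have "0 \<le> B" using B[of "Dc 1 0"] by (auto intro: order_trans[OF norm_ge_zero])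
    then show ?thesis using False by (simp add: Dc_zero)
  qed
  then show ?thesis by blast
qed

lemma line_deriv:
  fixes h :: "'a::euclidean_space \<Rightarrow> real"
  assumes "(h has_derivative H) (at (x + s *\<^sub>R b))"
  shows "((\<lambda>s. h (x + s *\<^sub>R b)) has_real_derivative H b) (at s)"
proof -
  have l: "((\<lambda>s. x + s *\<^sub>R b) has_derivative (\<lambda>s. s *\<^sub>R b)) (at s)"
    by (auto intro!: derivative_eq_intros)
  have c: "((\<lambda>s. h (x + s *\<^sub>R b)) has_derivative (\<lambda>s'. H (s' *\<^sub>R b))) (at s)"
    by (rule has_derivative_compose[OF l assms])
  have lin: "linear H" using assms has_derivative_linear by blast
  have "(\<lambda>s'. H (s' *\<^sub>R b)) = (*) (H b)"
    by (rule ext) (simp add: linear_cmul[OF lin])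
  with c show ?thesis unfolding has_field_derivative_def by simp
qed

lemma deriv_zero_outside:
  fixes h :: "'a::euclidean_space \<Rightarrow> real"
  assumes hd: "(h has_derivative H) (at x)" and K: "closed K" and hz: "\<And>y. y \<notin> K \<Longrightarrow> h y = 0"
    and x: "x \<notin> K"
  shows "H v = 0"
proof -
  have "((\<lambda>_. 0) has_derivative H) (at x)"
    by (rule has_derivative_transform_within_open[OF hd, of "- K"]) (use K x hz in auto)
  from has_derivative_unique[OF this has_derivative_const] show ?thesis by simp
qed

lemma integral_partial_zero:
  fixes h :: "'a::euclidean_space \<Rightarrow> real"
  assumes hd: "\<And>x. (h has_derivative H x) (at x)"
    and cont: "continuous_on UNIV (\<lambda>x. H x b)"
    and K: "compact K" and hz: "\<And>x. x \<notin> K \<Longrightarrow> h x = 0"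
  shows "integrable lborel (\<lambda>x. H x b)" "integral\<^sup>L lborel (\<lambda>x. H x b) = 0"
proof -
  have Kc: "closed K" using K compact_imp_closed by blast
  have Hz: "H x v = 0" if "x \<notin> K" for x v
    by (rule deriv_zero_outside[OF hd Kc hz that])
  have hcont: "continuous_on UNIV h"
    using hd has_derivative_continuous by (blast intro: continuous_at_imp_continuous_on)
  have hmeas: "h \<in> borel_measurable borel"
    by (rule borel_measurable_continuous_onI[OF hcont])
  have Hmeas: "(\<lambda>x. H x b) \<in> borel_measurable borel"
    by (rule borel_measurable_continuous_onI[OF cont])
  have eqK: "(\<lambda>x. H x b) = (\<lambda>x. indicator K x *\<^sub>R H x b)"
    by (rule ext) (auto simp: indicator_def Hz)
  show intH: "integrable lborel (\<lambda>x. H x b)"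
    by (subst eqK, rule borel_integrable_compact[OF K continuous_on_subset[OF cont]]) auto
  have eqKh: "h = (\<lambda>x. indicator K x *\<^sub>R h x)"
    by (rule ext) (auto simp: indicator_def hz)
  have inth: "integrable lborel h"
    by (subst eqKh, rule borel_integrable_compact[OF K continuous_on_subset[OF hcont]]) auto
  have "bounded ((\<lambda>x. H x b) ` K)"
    by (intro compact_imp_bounded compact_continuous_image continuous_on_subset[OF cont] K) auto
  then obtain M where M0: "\<And>x. x \<in> K \<Longrightarrow> \<bar>H x b\<bar> \<le> M"
    unfolding bounded_iff by auto
  have M: "\<bar>H x b\<bar> \<le> max M 0" for x
    using M0[of x] Hz[of x b] by (cases "x \<in> K") auto
  obtain R0 where R0: "\<And>x. x \<in> K \<Longrightarrow> norm x \<le> R0"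
    using compact_imp_bounded[OF K] unfolding bounded_iff by auto
  define R where "R = R0 + norm b"
  define t where "t n = inverse (real (Suc n))" for n
  have t0: "0 < t n" "t n \<le> 1" for n
    unfolding t_def by (auto simp: field_simps)
  define q where "q n x = (h (x + t n *\<^sub>R b) - h x) / t n" for n x
  have trans: "integral\<^sup>L lborel (\<lambda>x. h (x + c)) = integral\<^sup>L lborel h" for c :: 'a
  proof -
    have "integral\<^sup>L lborel (\<lambda>x. h (x + c)) = integral\<^sup>L lborel (\<lambda>x. h (c + x))"
      by (simp add: add.commute)
    also have "\<dots> = integral\<^sup>L (distr lborel borel ((+) c)) h"
      by (rule integral_distr[symmetric]) (auto simp: hmeas)
    also have "\<dots> = integral\<^sup>L lborel h" by (simp add: lborel_distr_plus)
    finally show ?thesis .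
  qed
  have transi: "integrable lborel (\<lambda>x. h (x + c))" for c :: 'a
  proof -
    have "integrable (distr lborel borel ((+) c)) h" using inth by (simp add: lborel_distr_plus)
    then have "integrable lborel (\<lambda>x. h (c + x))"
      by (subst (asm) integrable_distr_eq) (auto simp: hmeas)
    then show ?thesis by (simp add: add.commute)
  qed
  have intq: "integral\<^sup>L lborel (q n) = 0" for n
  proof -
    have "integral\<^sup>L lborel (q n) = integral\<^sup>L lborel (\<lambda>x. h (x + t n *\<^sub>R b) - h x) / t n"
      unfolding q_def by simp
    also have "integral\<^sup>L lborel (\<lambda>x. h (x + t n *\<^sub>R b) - h x) = 0"
      by (subst Bochner_Integration.integral_diff[OF transi inth]) (simp add: trans)
    finally show ?thesis by simp
  qed
  have lim: "(\<lambda>n. q n x) \<longlonglongrightarrow> H x b" for x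
  proof -
    have "((\<lambda>s. h (x + s *\<^sub>R b)) has_real_derivative H x b) (at 0)"
      using line_deriv[of h "H x" x 0 b] hd[of x] by simp
    then have d: "((\<lambda>s. (h (x + s *\<^sub>R b) - h x) / s) \<longlongrightarrow> H x b) (at 0)"
      unfolding has_field_derivative_iff by simp
    have "filterlim t (at 0) sequentially"
    proof -
      have teq: "t = (\<lambda>n. inverse (real (Suc n)))" by (rule ext) (simp add: t_def)
      show ?thesis
        unfolding filterlim_at using t0 LIMSEQ_inverse_real_of_nat
        by (auto simp: teq eventually_sequentially)
    qed
    from filterlim_compose[OF d this] show ?thesis by (simp add: q_def)
  qed
  have bound: "norm (q n x) \<le> max M 0 * indicator (cball 0 R) x" for n x
  proof (cases "x \<in> cball 0 R")
    case False
    then have nx: "norm x > R0 + norm b" by (simp add: R_def dist_norm)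
    have "x \<notin> K" using R0[of x] nx by (smt (verit) norm_ge_zero)
    moreover have "x + t n *\<^sub>R b \<notin> K"
    proof
      assume "x + t n *\<^sub>R b \<in> K"
      then have "norm (x + t n *\<^sub>R b) \<le> R0" by (rule R0)
      moreover have "norm x \<le> norm (x + t n *\<^sub>R b) + norm (t n *\<^sub>R b)"
        by (metis add_diff_cancel_right' norm_triangle_ineq4)
      moreover have "norm (t n *\<^sub>R b) \<le> norm b"
        using t0[of n] by (simp add: mult_left_le_one_le)
      ultimately show False using nx by simp
    qed
    ultimately show ?thesis using False by (simp add: q_def hz)
  next
    case True
    have der: "((\<lambda>s. h (x + s *\<^sub>R b)) has_real_derivative H (x + s *\<^sub>R b) b) (at s)" for s
      by (rule line_deriv[OF hd])
    obtain z where "h (x + t n *\<^sub>R b) - h (x + 0 *\<^sub>R b) = (t n - 0) * H (x + z *\<^sub>R b) b"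
      using MVT2[of 0 "t n" "\<lambda>s. h (x + s *\<^sub>R b)" "\<lambda>s. H (x + s *\<^sub>R b) b"] t0[of n] der by blast
    then have "q n x = H (x + z *\<^sub>R b) b"
      using t0[of n] by (simp add: q_def)
    then show ?thesis using True M[of "x + z *\<^sub>R b"] by simp
  qed
  have qmeas: "q n \<in> borel_measurable lborel" for n
  proof -
    have m1: "(\<lambda>x. x + t n *\<^sub>R b) \<in> borel_measurable borel"
      by (intro borel_measurable_continuous_onI continuous_intros)
    have m2: "(\<lambda>x. h (x + t n *\<^sub>R b)) \<in> borel_measurable borel"
      using measurable_compose[OF m1 hmeas] by (simp add: o_def)
    have "(\<lambda>x. (h (x + t n *\<^sub>R b) - h x) / t n) \<in> borel_measurable borel"
      by (intro borel_measurable_divide borel_measurable_diff m2 hmeas measurable_const) simp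
    then show ?thesis unfolding q_def by simp
  qed
  have "(\<lambda>n. integral\<^sup>L lborel (q n)) \<longlonglongrightarrow> integral\<^sup>L lborel (\<lambda>x. H x b)"
  proof (rule integral_dominated_convergence[where w="\<lambda>x. max M 0 * indicator (cball 0 R) x"])
    show "(\<lambda>x. H x b) \<in> borel_measurable lborel" using Hmeas by simp
    show "integrable lborel (\<lambda>x. max M 0 * indicator (cball 0 R) x)"
      by (intro integrable_mult_right integrable_real_indicator emeasure_bounded_finite) auto
  qed (use qmeas lim bound in auto)
  then show "integral\<^sup>L lborel (\<lambda>x. H x b) = 0"
    using intq LIMSEQ_unique[OF _ tendsto_const] by simp
qed

lemma lin_expand:
  fixes L :: "'a::euclidean_space \<Rightarrow> real"
  assumes "linear L"
  shows "L w = (\<Sum>b\<in>Basis. L b * (w \<bullet> b))"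
proof -
  have "L w = L (\<Sum>b\<in>Basis. (w \<bullet> b) *\<^sub>R b)" by (simp add: euclidean_representation)
  also have "\<dots> = (\<Sum>b\<in>Basis. (w \<bullet> b) * L b)"
    by (simp add: linear_sum[OF assms] linear_cmul[OF assms])
  finally show ?thesis by (simp add: mult.commute)
qed

lemma ibp:
  fixes v :: "'a::euclidean_space \<Rightarrow> 'a" and \<phi> :: "'a \<Rightarrow> real"
  assumes oU: "open U" and tf: "test_fun U \<phi>"
    and vd: "\<And>x. x \<in> U \<Longrightarrow> v differentiable at x"
    and vc: "\<And>b. b \<in> Basis \<Longrightarrow> continuous_on U (\<lambda>x. frechet_derivative v (at x) b)"
  shows "set_integrable lebesgue U (\<lambda>x. frechet_derivative \<phi> (at x) (v x))"
    "set_integrable lebesgue U (\<lambda>x. \<phi> x * divergence v x)"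
    "(LINT x:U|lebesgue. frechet_derivative \<phi> (at x) (v x)) = - (LINT x:U|lebesgue. \<phi> x * divergence v x)"
proof -
  define K where "K = closure {x. \<phi> x \<noteq> 0}"
  have K: "compact K" "K \<subseteq> U" using tf by (auto simp: test_fun_def K_def)
  have Kc: "closed K" by (simp add: K_def)
  have \<phi>z: "\<phi> y = 0" if "y \<notin> K" for y
    using that closure_subset[of "{x. \<phi> x \<noteq> 0}"] unfolding K_def by auto
  have "smooth_on UNIV \<phi>" using tf by (simp add: test_fun_def)
  then have c1: "Ck_on (Suc 0) UNIV \<phi>" unfolding smooth_on_def by (rule spec)
  have \<phi>d: "(\<phi> has_derivative frechet_derivative \<phi> (at x)) (at x)" for x
    using c1 by (simp add: frechet_derivative_works[symmetric])
  have \<phi>c: "continuous_on UNIV (\<lambda>x. frechet_derivative \<phi> (at x) b)" if "b \<in> Basis" for b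
    using c1 that by simp
  have \<phi>cont: "continuous_on UNIV \<phi>"
    using \<phi>d has_derivative_continuous by (blast intro: continuous_at_imp_continuous_on)
  have D\<phi>z: "frechet_derivative \<phi> (at x) w = 0" if "x \<notin> K" for x w
    by (rule deriv_zero_outside[OF \<phi>d Kc \<phi>z that])
  have vD: "(v has_derivative frechet_derivative v (at x)) (at x)" if "x \<in> U" for x
    using vd[OF that] by (simp add: frechet_derivative_works[symmetric])
  have vcont: "continuous_on U v"
    using vD has_derivative_continuous by (blast intro: continuous_at_imp_continuous_on)
  have lin\<phi>: "linear (frechet_derivative \<phi> (at x))" for x
    using \<phi>d has_derivative_linear by blast
  define a where "a b x = (if x \<in> U then frechet_derivative \<phi> (at x) b * (v x \<bullet> b) else 0)" for b x
  define c where "c b x = (if x \<in> U then \<phi> x * (frechet_derivative v (at x) b \<bullet> b) else 0)" for b x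
  define h where "h b x = \<phi> x * (v x \<bullet> b)" for b x
  define H where "H b x w = (if x \<in> U then frechet_derivative \<phi> (at x) w * (v x \<bullet> b) + \<phi> x * (frechet_derivative v (at x) w \<bullet> b) else 0)" for b x w
  have UK: "U \<union> - K = UNIV" using K by auto
  have hz: "h b x = 0" if "x \<notin> K" for b x
    using \<phi>z[OF that] by (simp add: h_def)
  have hd: "(h b has_derivative H b x) (at x)" for b x
  proof (cases "x \<in> U")
    case True
    have "((\<lambda>x. v x \<bullet> b) has_derivative (\<lambda>w. frechet_derivative v (at x) w \<bullet> b)) (at x)"
      using has_derivative_inner[OF vD[OF True] has_derivative_const[of b]] by simp
    from has_derivative_mult[OF \<phi>d this]
    show ?thesis using True unfolding h_def H_def by (simp add: algebra_simps)
  next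
    case False
    then have xK: "x \<notin> K" using K by auto
    have "H b x = (\<lambda>w. 0)" using False by (simp add: H_def fun_eq_iff)
    then have "((\<lambda>_. 0) has_derivative H b x) (at x)" using has_derivative_const[of "0::real" "at x"] by simp
    then show ?thesis
      by (rule has_derivative_transform_within_open[of _ _ x UNIV "- K"]) (use Kc xK hz in auto)
  qed
  have Hab: "H b x b = a b x + c b x" for b x
    by (simp add: H_def a_def c_def)
  have acont: "continuous_on UNIV (a b)" if b: "b \<in> Basis" for b
  proof -
    have "continuous_on U (a b)"
    proof (rule continuous_on_eq)
      show "continuous_on U (\<lambda>x. frechet_derivative \<phi> (at x) b * (v x \<bullet> b))"
        by (intro continuous_intros continuous_on_subset[OF \<phi>c[OF b]] vcont) auto
    qed (simp add: a_def)
    moreover have "continuous_on (- K) (a b)"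
      by (rule continuous_on_eq[OF continuous_on_const[of _ 0]]) (simp add: a_def D\<phi>z)
    ultimately show ?thesis using continuous_on_open_Un[of U "- K" "a b"] oU Kc UK by auto
  qed
  have ccont: "continuous_on UNIV (c b)" if b: "b \<in> Basis" for b
  proof -
    have "continuous_on U (c b)"
    proof (rule continuous_on_eq)
      show "continuous_on U (\<lambda>x. \<phi> x * (frechet_derivative v (at x) b \<bullet> b))"
        by (intro continuous_intros continuous_on_subset[OF \<phi>cont] vc b) auto
    qed (simp add: c_def)
    moreover have "continuous_on (- K) (c b)"
      by (rule continuous_on_eq[OF continuous_on_const[of _ 0]]) (simp add: c_def \<phi>z)
    ultimately show ?thesis using continuous_on_open_Un[of U "- K" "c b"] oU Kc UK by auto
  qed
  have aK: "a b x = indicator K x *\<^sub>R a b x" for b x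
    by (cases "x \<in> K") (auto simp: a_def D\<phi>z)
  have cK: "c b x = indicator K x *\<^sub>R c b x" for b x
    by (cases "x \<in> K") (auto simp: c_def \<phi>z)
  have aint: "integrable lborel (a b)" if "b \<in> Basis" for b
    by (subst fun_eq_iff[THEN iffD2, OF allI[OF aK]], rule borel_integrable_compact[OF K(1) continuous_on_subset[OF acont[OF that]]]) auto
  have cint: "integrable lborel (c b)" if "b \<in> Basis" for b
    by (subst fun_eq_iff[THEN iffD2, OF allI[OF cK]], rule borel_integrable_compact[OF K(1) continuous_on_subset[OF ccont[OF that]]]) auto
  have zero: "integral\<^sup>L lborel (\<lambda>x. a b x + c b x) = 0" if b: "b \<in> Basis" for b
  proof -
    have "continuous_on UNIV (\<lambda>x. H b x b)"
      unfolding Hab by (intro continuous_on_add acont ccont b)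
    from integral_partial_zero(2)[OF hd this K(1) hz] show ?thesis by (simp add: Hab)
  qed
  have suma: "(\<Sum>b\<in>Basis. a b x) = indicator U x *\<^sub>R frechet_derivative \<phi> (at x) (v x)" for x
    by (simp add: a_def indicator_def lin_expand[OF lin\<phi>, of x "v x"])
  have sumc: "(\<Sum>b\<in>Basis. c b x) = indicator U x *\<^sub>R (\<phi> x * divergence v x)" for x
    by (simp add: c_def indicator_def divergence_def sum_distrib_left)
  have iA: "integrable lborel (\<lambda>x. \<Sum>b\<in>Basis. a b x)"
    by (rule Bochner_Integration.integrable_sum, rule aint)
  have iC: "integrable lborel (\<lambda>x. \<Sum>b\<in>Basis. c b x)"
    by (rule Bochner_Integration.integrable_sum, rule cint)
  have mA: "(\<lambda>x. \<Sum>b\<in>Basis. a b x) \<in> borel_measurable lborel" using iA by auto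
  have mC: "(\<lambda>x. \<Sum>b\<in>Basis. c b x) \<in> borel_measurable lborel" using iC by auto
  have tot: "integral\<^sup>L lborel (\<lambda>x. \<Sum>b\<in>Basis. a b x) + integral\<^sup>L lborel (\<lambda>x. \<Sum>b\<in>Basis. c b x) = 0"
  proof -
    have "integral\<^sup>L lborel (\<lambda>x. \<Sum>b\<in>Basis. a b x) + integral\<^sup>L lborel (\<lambda>x. \<Sum>b\<in>Basis. c b x)
        = (\<Sum>b\<in>Basis. integral\<^sup>L lborel (a b)) + (\<Sum>b\<in>Basis. integral\<^sup>L lborel (c b))"
      by (simp add: Bochner_Integration.integral_sum aint cint)
    also have "\<dots> = (\<Sum>b\<in>Basis. integral\<^sup>L lborel (\<lambda>x. a b x + c b x))"
      by (simp add: sum.distrib Bochner_Integration.integral_add aint cint)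
    also have "\<dots> = 0" by (simp add: zero)
    finally show ?thesis .
  qed
  show "set_integrable lebesgue U (\<lambda>x. frechet_derivative \<phi> (at x) (v x))"
    unfolding set_integrable_def using iA mA by (simp add: suma integrable_completion)
  show "set_integrable lebesgue U (\<lambda>x. \<phi> x * divergence v x)"
    unfolding set_integrable_def using iC mC by (simp add: sumc integrable_completion)
  show "(LINT x:U|lebesgue. frechet_derivative \<phi> (at x) (v x)) = - (LINT x:U|lebesgue. \<phi> x * divergence v x)"
    using tot mA mC unfolding set_lebesgue_integral_def by (simp add: suma sumc integral_completion eq_neg_iff_add_eq_0)
qed

lemma density_pair:
  fixes g :: "'a::euclidean_space \<Rightarrow> real"
  assumes oU: "open U" and gc: "continuous_on U g" and gi: "set_integrable lebesgue U g"
  defines "\<mu> \<equiv> density (restrict_space lborel U) (\<lambda>x. ennreal (max 0 (g x)))"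
    and "\<nu> \<equiv> density (restrict_space lborel U) (\<lambda>x. ennreal (max 0 (- g x)))"
  shows "finite_measure \<mu>" "finite_measure \<nu>"
    "sets \<mu> = sets (restrict_space borel U)" "sets \<nu> = sets (restrict_space borel U)"
    "\<And>\<phi> B. continuous_on UNIV \<phi> \<Longrightarrow> (\<And>x. \<bar>\<phi> x\<bar> \<le> B) \<Longrightarrow>
       (\<integral>x. \<phi> x \<partial>\<mu>) - (\<integral>x. \<phi> x \<partial>\<nu>) = (LINT x:U|lebesgue. \<phi> x * g x)"
proof -
  define M where "M = restrict_space lborel U"
  have Ub: "U \<in> sets borel" using oU by simp
  have sM: "sets M = sets (restrict_space borel U)"
    by (simp add: M_def sets_restrict_space)
  have gm: "g \<in> borel_measurable M"
    by (subst measurable_cong_sets[OF sM refl]) (rule borel_measurable_continuous_on_restrict[OF gc])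
  have gml: "(\<lambda>x. indicator U x *\<^sub>R g x) \<in> borel_measurable lborel"
    using borel_measurable_continuous_on_indicator[OF Ub gc] by simp
  have gIl: "integrable lborel (\<lambda>x. indicator U x *\<^sub>R g x)"
    using gi gml unfolding set_integrable_def by (simp add: integrable_completion)
  have UM: "U \<inter> space lborel \<in> sets lborel" using Ub by simp
  have gIM: "integrable M g"
    unfolding M_def using gIl by (simp add: integrable_restrict_space[OF UM])
  have fin: "(\<integral>\<^sup>+ x. ennreal (max 0 (s * g x)) \<partial>M) < \<infinity>" if s: "\<bar>s\<bar> = 1" for s :: real
  proof -
    have "(\<integral>\<^sup>+ x. ennreal (max 0 (s * g x)) \<partial>M) \<le> (\<integral>\<^sup>+ x. ennreal (norm (g x)) \<partial>M)"
    proof (intro nn_integral_mono)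
      fix x
      have "s * g x \<le> \<bar>g x\<bar>" using abs_ge_self[of "s * g x"] s by (simp add: abs_mult)
      then show "ennreal (max 0 (s * g x)) \<le> ennreal (norm (g x))" by (intro ennreal_leI) auto
    qed
    also have "\<dots> < \<infinity>" using gIM by (simp add: integrable_iff_bounded)
    finally show ?thesis .
  qed
  have finm: "finite_measure (density M (\<lambda>x. ennreal (max 0 (s * g x))))" if s: "\<bar>s\<bar> = 1" for s :: real
  proof (rule finite_measureI)
    have m: "(\<lambda>x. ennreal (max 0 (s * g x))) \<in> borel_measurable M" using gm by measurable
    have "emeasure (density M (\<lambda>x. ennreal (max 0 (s * g x)))) (space (density M (\<lambda>x. ennreal (max 0 (s * g x)))))
        = (\<integral>\<^sup>+ x. ennreal (max 0 (s * g x)) * indicator (space M) x \<partial>M)"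
      by (simp add: emeasure_density[OF m])
    also have "\<dots> = (\<integral>\<^sup>+ x. ennreal (max 0 (s * g x)) \<partial>M)"
      by (intro nn_integral_cong) (simp add: indicator_def)
    finally show "emeasure (density M (\<lambda>x. ennreal (max 0 (s * g x)))) (space (density M (\<lambda>x. ennreal (max 0 (s * g x))))) \<noteq> \<infinity>"
      using fin[OF s] by simp
  qed
  show "finite_measure \<mu>" using finm[of 1] by (simp add: \<mu>_def M_def)
  show "finite_measure \<nu>" using finm[of "-1"] by (simp add: \<nu>_def M_def)
  show "sets \<mu> = sets (restrict_space borel U)" using sM by (simp add: \<mu>_def M_def)
  show "sets \<nu> = sets (restrict_space borel U)" using sM by (simp add: \<nu>_def M_def)
  fix \<phi> :: "'a \<Rightarrow> real" and B
  assume \<phi>c: "continuous_on UNIV \<phi>" and \<phi>B: "\<And>x. \<bar>\<phi> x\<bar> \<le> B"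
  have \<phi>m: "\<phi> \<in> borel_measurable M"
    using borel_measurable_continuous_onI[OF \<phi>c] unfolding M_def
    by (intro measurable_restrict_space1) simp
  have int_s: "integral\<^sup>L (density M (\<lambda>x. ennreal (max 0 (s * g x)))) \<phi> = integral\<^sup>L M (\<lambda>x. max 0 (s * g x) * \<phi> x)" for s :: real
    by (subst integral_density) (use \<phi>m gm in auto)
  have ii_s: "integrable M (\<lambda>x. max 0 (s * g x) * \<phi> x)" if s: "\<bar>s\<bar> = 1" for s :: real
  proof (rule Bochner_Integration.integrable_bound[where f="\<lambda>x. B * g x"])
    show "integrable M (\<lambda>x. B * g x)" using gIM by simp
    show "(\<lambda>x. max 0 (s * g x) * \<phi> x) \<in> borel_measurable M" using gm \<phi>m by measurable
    have "\<bar>max 0 (s * g x) * \<phi> x\<bar> \<le> \<bar>B * g x\<bar>" for x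
    proof -
      have "s * g x \<le> \<bar>g x\<bar>" using abs_ge_self[of "s * g x"] s by (simp add: abs_mult)
      then have "\<bar>max 0 (s * g x)\<bar> \<le> \<bar>g x\<bar>" by auto
      moreover have "\<bar>\<phi> x\<bar> \<le> \<bar>B\<bar>" using \<phi>B[of x] by linarith
      ultimately have "\<bar>max 0 (s * g x)\<bar> * \<bar>\<phi> x\<bar> \<le> \<bar>g x\<bar> * \<bar>B\<bar>"
        by (intro mult_mono) auto
      then show ?thesis by (simp add: abs_mult mult.commute)
    qed
    then show "AE x in M. norm (max 0 (s * g x) * \<phi> x) \<le> norm (B * g x)" by simp
  qed
  have "(\<integral>x. \<phi> x \<partial>\<mu>) - (\<integral>x. \<phi> x \<partial>\<nu>) = integral\<^sup>L M (\<lambda>x. max 0 (g x) * \<phi> x) - integral\<^sup>L M (\<lambda>x. max 0 (- g x) * \<phi> x)"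
    using int_s[of 1] int_s[of "-1"] by (simp add: \<mu>_def \<nu>_def M_def)
  also have "\<dots> = integral\<^sup>L M (\<lambda>x. max 0 (g x) * \<phi> x - max 0 (- g x) * \<phi> x)"
    using ii_s[of 1] ii_s[of "-1"] by (simp add: Bochner_Integration.integral_diff)
  also have "\<dots> = integral\<^sup>L M (\<lambda>x. \<phi> x * g x)"
    by (intro Bochner_Integration.integral_cong) (auto simp: max_def algebra_simps)
  also have "\<dots> = integral\<^sup>L lborel (\<lambda>x. indicator U x *\<^sub>R (\<phi> x * g x))"
    unfolding M_def by (rule integral_restrict_space[OF UM])
  also have "\<dots> = integral\<^sup>L lebesgue (\<lambda>x. indicator U x *\<^sub>R (\<phi> x * g x))"
  proof (rule integral_completion[symmetric])
    have "continuous_on U (\<lambda>x. \<phi> x * g x)"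
      by (intro continuous_intros continuous_on_subset[OF \<phi>c] gc) auto
    from borel_measurable_continuous_on_indicator[OF Ub this]
    show "(\<lambda>x. indicator U x *\<^sub>R (\<phi> x * g x)) \<in> borel_measurable lborel" by simp
  qed
  also have "\<dots> = (LINT x:U|lebesgue. \<phi> x * g x)"
    by (simp add: set_lebesgue_integral_def)
  finally show "(\<integral>x. \<phi> x \<partial>\<mu>) - (\<integral>x. \<phi> x \<partial>\<nu>) = (LINT x:U|lebesgue. \<phi> x * g x)" .
qed

lemma test_fun_props:
  assumes "test_fun U \<phi>"
  shows "continuous_on UNIV \<phi>" "\<exists>B. \<forall>x. \<bar>\<phi> x\<bar> \<le> B"
proof -
  define K where "K = closure {x. \<phi> x \<noteq> 0}"
  have K: "compact K" using assms by (auto simp: test_fun_def K_def)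
  have \<phi>z: "\<phi> y = 0" if "y \<notin> K" for y
    using that closure_subset[of "{x. \<phi> x \<noteq> 0}"] unfolding K_def by auto
  have "smooth_on UNIV \<phi>" using assms by (simp add: test_fun_def)
  then have "Ck_on 0 UNIV \<phi>" unfolding smooth_on_def by (rule spec)
  then show c: "continuous_on UNIV \<phi>" by simp
  have "bounded (\<phi> ` K)"
    by (intro compact_imp_bounded compact_continuous_image continuous_on_subset[OF c] K) auto
  then obtain B where B: "\<And>x. x \<in> K \<Longrightarrow> \<bar>\<phi> x\<bar> \<le> B"
    unfolding bounded_iff by auto
  have "\<bar>\<phi> x\<bar> \<le> max B 0" for x
    using B[of x] \<phi>z[of x] by (cases "x \<in> K") auto
  then show "\<exists>B. \<forall>x. \<bar>\<phi> x\<bar> \<le> B" by blast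
qed

lemma L_member:
  fixes v :: "'a::euclidean_space \<Rightarrow> 'a"
  assumes oU: "open U" and sm: "smooth_on U v" and nb: "\<And>x. x \<in> U \<Longrightarrow> norm (v x) \<le> 1"
    and di: "set_integrable lebesgue U (divergence v)" and dc: "continuous_on U (divergence v)"
    and db: "bounded (divergence v ` U)"
  shows "v \<in> L_fields U"
proof -
  have c0: "Ck_on 0 U v" using sm unfolding smooth_on_def by (rule spec)
  have c1: "Ck_on (Suc 0) U v" using sm unfolding smooth_on_def by (rule spec)
  have vcont: "continuous_on U v" using c0 by simp
  have vd: "\<And>x. x \<in> U \<Longrightarrow> v differentiable at x" using c1 by simp
  have vc: "\<And>b. b \<in> Basis \<Longrightarrow> continuous_on U (\<lambda>x. frechet_derivative v (at x) b)" using c1 by simp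
  have Ul: "U \<in> sets lebesgue" using oU by simp
  define \<mu> where "\<mu> = density (restrict_space lborel U) (\<lambda>x. ennreal (max 0 (divergence v x)))"
  define \<nu> where "\<nu> = density (restrict_space lborel U) (\<lambda>x. ennreal (max 0 (- divergence v x)))"
  note dp = density_pair[OF oU dc di, folded \<mu>_def \<nu>_def]
  have m: "v \<in> borel_measurable (restrict_space lebesgue U)"
    by (rule continuous_imp_measurable_on_sets_lebesgue[OF vcont Ul])
  have ae: "\<exists>C. AE x in lebesgue. x \<in> U \<longrightarrow> norm (v x) \<le> C"
    using nb by (intro exI[of _ 1] AE_I2) auto
  have idt: "\<forall>\<phi>. test_fun U \<phi> \<longrightarrow>
           (LINT x:U|lebesgue. frechet_derivative \<phi> (at x) (v x))
             = - ((\<integral>x. \<phi> x \<partial>\<mu>) - (\<integral>x. \<phi> x \<partial>\<nu>))"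
  proof (intro allI impI)
    fix \<phi> :: "'a \<Rightarrow> real" assume tf: "test_fun U \<phi>"
    obtain B where B: "\<And>x. \<bar>\<phi> x\<bar> \<le> B" using test_fun_props(2)[OF tf] by blast
    have "(\<integral>x. \<phi> x \<partial>\<mu>) - (\<integral>x. \<phi> x \<partial>\<nu>) = (LINT x:U|lebesgue. \<phi> x * divergence v x)"
      by (rule dp(5)[OF test_fun_props(1)[OF tf] B])
    then show "(LINT x:U|lebesgue. frechet_derivative \<phi> (at x) (v x)) = - ((\<integral>x. \<phi> x \<partial>\<mu>) - (\<integral>x. \<phi> x \<partial>\<nu>))"
      using ibp(3)[OF oU tf vd vc] by simp
  qed
  have "DM_inf U v"
    unfolding DM_inf_def using m ae dp(1-4) idt by blast
  then show ?thesis using sm di dc db unfolding L_fields_def by simp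
qed

definition psi :: "real \<Rightarrow> 'a::euclidean_space \<Rightarrow> real" where
  "psi c x = Dc 0 (c * (x \<bullet> x))"

definition vf :: "real \<Rightarrow> ('a::euclidean_space \<Rightarrow> 'a) \<Rightarrow> 'a \<Rightarrow> 'a" where
  "vf c u x = psi c x *\<^sub>R u x"

definition dv :: "real \<Rightarrow> ('a::euclidean_space \<Rightarrow> 'a) \<Rightarrow> 'a \<Rightarrow> real" where
  "dv c u x = psi c x * divergence u x + 2 * c * Dc 1 (c * (x \<bullet> x)) * (x \<bullet> u x)"

lemma div_vf:
  fixes u :: "'a::euclidean_space \<Rightarrow> 'a"
  assumes ud: "u differentiable at x"
  shows "divergence (vf c u) x = dv c u x"
proof -
  have pd: "(psi c has_derivative (\<lambda>h. (c * (2 * (x \<bullet> h))) * Dc 1 (c * (x \<bullet> x)))) (at x)"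
    using radial_deriv[OF rsmooth_Dc, of c x] unfolding psi_def[abs_def] by simp
  have uD: "(u has_derivative frechet_derivative u (at x)) (at x)"
    using ud by (simp add: frechet_derivative_works[symmetric])
  have "((\<lambda>x. psi c x *\<^sub>R u x) has_derivative
      (\<lambda>h. psi c x *\<^sub>R frechet_derivative u (at x) h + ((c * (2 * (x \<bullet> h))) * Dc 1 (c * (x \<bullet> x))) *\<^sub>R u x)) (at x)"
    by (rule has_derivative_scaleR[OF pd uD])
  then have fd: "frechet_derivative (vf c u) (at x) =
      (\<lambda>h. psi c x *\<^sub>R frechet_derivative u (at x) h + ((c * (2 * (x \<bullet> h))) * Dc 1 (c * (x \<bullet> x))) *\<^sub>R u x)"
    unfolding vf_def[abs_def] by (rule frechet_derivative_at[symmetric])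
  have "divergence (vf c u) x = (\<Sum>b\<in>Basis. psi c x * (frechet_derivative u (at x) b \<bullet> b)
      + 2 * c * Dc 1 (c * (x \<bullet> x)) * ((x \<bullet> b) * (u x \<bullet> b)))"
    unfolding divergence_def fd by (intro sum.cong refl) (simp add: inner_add_left algebra_simps)
  also have "\<dots> = psi c x * divergence u x + 2 * c * Dc 1 (c * (x \<bullet> x)) * (\<Sum>b\<in>Basis. (x \<bullet> b) * (u x \<bullet> b))"
    by (simp add: sum.distrib sum_distrib_left divergence_def)
  also have "\<dots> = dv c u x"
    by (simp add: dv_def euclidean_inner[of x "u x"])
  finally show ?thesis .
qed

lemma psi_bounds: "0 \<le> c \<Longrightarrow> 0 \<le> psi c x \<and> psi c x \<le> 1"
  unfolding psi_def by (rule Dc0_bounds) simp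

lemma smooth_vf:
  assumes oU: "open U" and sm: "smooth_on U u"
  shows "smooth_on U (vf c u)"
  unfolding smooth_on_def
proof
  fix k
  have "Ck_on k U (psi c :: 'a \<Rightarrow> real)"
    unfolding psi_def[abs_def] by (rule Ck_UNIV_subset[OF Ck_radial[OF rsmooth_Dc]])
  moreover have "Ck_on k U u" using sm unfolding smooth_on_def by simp
  ultimately show "Ck_on k U (vf c u)"
    unfolding vf_def[abs_def] by (rule Ck_scaleR[OF oU])
qed

lemma cnorm_bound:
  fixes x :: "'a::euclidean_space"
  assumes c: "0 < c" and s: "c * (x \<bullet> x) < 1"
  shows "c * norm x \<le> max 1 c"
proof (cases "norm x \<le> 1")
  case True
  then have "c * norm x \<le> c" using c by (simp add: mult_left_le_one_le)
  then show ?thesis by simp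
next
  case False
  then have "norm x * 1 \<le> norm x * norm x" by (intro mult_left_mono) auto
  then have "norm x \<le> norm x * norm x" by simp
  then have "c * norm x \<le> c * (x \<bullet> x)" using c by (simp add: power2_norm_eq_inner[symmetric] power2_eq_square)
  then show ?thesis using s by simp
qed

lemma dv_zero:
  fixes x :: "'a::euclidean_space"
  assumes "1 \<le> c * (x \<bullet> x)"
  shows "dv c u x = 0"
  using assms by (simp add: dv_def psi_def Dc_zero)

lemma dv_bound:
  fixes x :: "'a::euclidean_space"
  assumes c: "0 < c" and B1: "\<And>s. 0 \<le> s \<Longrightarrow> \<bar>Dc 1 s\<bar> \<le> B1" and un: "norm (u x) \<le> 1"
  shows "\<bar>dv c u x\<bar> \<le> \<bar>divergence u x\<bar> + 2 * B1 * max 1 c"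
proof (cases "c * (x \<bullet> x) < 1")
  case True
  have b1: "\<bar>Dc 1 (c * (x \<bullet> x))\<bar> \<le> B1" using c by (intro B1) simp
  have p: "\<bar>psi c x * divergence u x\<bar> \<le> \<bar>divergence u x\<bar>"
    using psi_bounds[of c x] c by (simp add: abs_mult mult_left_le_one_le)
  have xu: "\<bar>x \<bullet> u x\<bar> \<le> norm x"
    using Cauchy_Schwarz_ineq2[of x "u x"] un by (smt (verit) mult_left_le norm_ge_zero)
  have "\<bar>2 * c * Dc 1 (c * (x \<bullet> x)) * (x \<bullet> u x)\<bar> = 2 * \<bar>Dc 1 (c * (x \<bullet> x))\<bar> * (c * \<bar>x \<bullet> u x\<bar>)"
    using c by (simp add: abs_mult)
  also have "\<dots> \<le> 2 * B1 * (c * norm x)"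
    using b1 xu c by (intro mult_mono mult_left_mono) auto
  also have "\<dots> \<le> 2 * B1 * max 1 c"
    using cnorm_bound[OF c True] b1 by (intro mult_left_mono) auto
  finally show ?thesis unfolding dv_def using p by linarith
next
  case False
  have "0 \<le> B1" using B1[of 0] by simp
  then show ?thesis using False dv_zero[of c x u] by simp
qed

lemma ball_of_support:
  fixes x :: "'a::euclidean_space"
  assumes c: "0 < c" and s: "c * (x \<bullet> x) < 1"
  shows "norm x \<le> max 1 (inverse c)"
proof (cases "norm x \<le> 1")
  case True then show ?thesis by simp
next
  case False
  then have "norm x * 1 \<le> norm x * norm x" by (intro mult_left_mono) auto
  also have "\<dots> = x \<bullet> x" by (simp add: power2_norm_eq_inner[symmetric] power2_eq_square)
  also have "\<dots> < inverse c" using s c by (simp add: field_simps)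
  finally show ?thesis by simp
qed

lemma dv_cont:
  fixes u :: "'a::euclidean_space \<Rightarrow> 'a"
  assumes uc: "continuous_on U u" and dc: "continuous_on U (divergence u)"
  shows "continuous_on U (dv c u)"
proof -
  have p: "continuous_on U (\<lambda>x::'a. Dc n (c * (x \<bullet> x)))" for n
    by (intro continuous_at_imp_continuous_on ballI continuous_intros isCont_o2[OF _ Dc_cont]) 
  show ?thesis unfolding dv_def[abs_def] psi_def
    by (intro continuous_intros p uc dc)
qed

lemma dv_props:
  fixes u :: "'a::euclidean_space \<Rightarrow> 'a"
  assumes oU: "open U" and uL: "u \<in> L_fields U" and un: "\<And>x. x \<in> U \<Longrightarrow> norm (u x) \<le> 1"
    and Bu: "\<And>x. x \<in> U \<Longrightarrow> \<bar>divergence u x\<bar> \<le> Bu"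
    and B1: "\<And>s. 0 \<le> s \<Longrightarrow> \<bar>Dc 1 s\<bar> \<le> B1"
    and c: "0 < c"
  shows "vf c u \<in> L_fields U" "\<And>x. x \<in> U \<Longrightarrow> norm (vf c u x) \<le> 1"
    "\<And>x. x \<in> U \<Longrightarrow> divergence (vf c u) x = dv c u x"
    "\<And>x. x \<in> U \<Longrightarrow> \<bar>dv c u x\<bar> \<le> Bu + 2 * B1 * max 1 c"
    "(\<lambda>x. indicator U x *\<^sub>R dv c u x) \<in> borel_measurable lebesgue"
    "set_integrable lebesgue U (dv c u)"
proof -
  have sm: "smooth_on U u" and di: "set_integrable lebesgue U (divergence u)"
    and dc: "continuous_on U (divergence u)" using uL by (auto simp: L_fields_def)
  have c0: "Ck_on 0 U u" using sm unfolding smooth_on_def by (rule spec)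
  have c1: "Ck_on (Suc 0) U u" using sm unfolding smooth_on_def by (rule spec)
  have uc: "continuous_on U u" using c0 by simp
  have ud: "\<And>x. x \<in> U \<Longrightarrow> u differentiable at x" using c1 by simp
  show dveq: "\<And>x. x \<in> U \<Longrightarrow> divergence (vf c u) x = dv c u x"
    by (rule div_vf[OF ud])
  show nb: "\<And>x. x \<in> U \<Longrightarrow> norm (vf c u x) \<le> 1"
  proof -
    fix x assume x: "x \<in> U"
    have "norm (vf c u x) = \<bar>psi c x\<bar> * norm (u x)" by (simp add: vf_def)
    also have "\<dots> \<le> 1 * 1"
      using psi_bounds[of c x] c un[OF x] by (intro mult_mono) auto
    finally show "norm (vf c u x) \<le> 1" by simp
  qed
  show bd: "\<And>x. x \<in> U \<Longrightarrow> \<bar>dv c u x\<bar> \<le> Bu + 2 * B1 * max 1 c"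
  proof -
    fix x assume x: "x \<in> U"
    from dv_bound[of c B1 u x, OF c B1 un[OF x]] Bu[OF x] show "\<bar>dv c u x\<bar> \<le> Bu + 2 * B1 * max 1 c" by linarith
  qed
  have dvc: "continuous_on U (dv c u)" by (rule dv_cont[OF uc dc])
  have Ub: "U \<in> sets borel" using oU by simp
  show meas: "(\<lambda>x. indicator U x *\<^sub>R dv c u x) \<in> borel_measurable lebesgue"
    using borel_measurable_continuous_on_indicator[OF Ub dvc]
    by (intro measurable_completion) simp
  define Rc where "Rc = max 1 (inverse c)"
  define K where "K = Bu + 2 * B1 * max 1 c"
  show si: "set_integrable lebesgue U (dv c u)"
    unfolding set_integrable_def
  proof (rule Bochner_Integration.integrable_bound[where f="\<lambda>x. K * indicator (cball (0::'a) Rc) x"])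
    show "integrable lebesgue (\<lambda>x. K * indicator (cball (0::'a) Rc) x)"
      using emeasure_bounded_finite[OF bounded_cball[of "0::'a" Rc]] by (intro integrable_mult_right integrable_real_indicator) auto
    show "(\<lambda>x. indicator U x *\<^sub>R dv c u x) \<in> borel_measurable lebesgue" by (rule meas)
    have "norm (indicator U x *\<^sub>R dv c u x) \<le> norm (K * indicator (cball (0::'a) Rc) x)" for x
    proof (cases "x \<in> U \<and> c * (x \<bullet> x) < 1")
      case True
      then have "norm x \<le> Rc" unfolding Rc_def using ball_of_support[OF c] by blast
      moreover have "\<bar>dv c u x\<bar> \<le> K" using bd True unfolding K_def by blast
      ultimately show ?thesis using True by (simp add: indicator_def)
    next
      case False
      then show ?thesis using dv_zero[of c x u] by (auto simp: indicator_def)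
    qed
    then show "AE x in lebesgue. norm (indicator U x *\<^sub>R dv c u x) \<le> norm (K * indicator (cball (0::'a) Rc) x)"
      by simp
  qed
  show "vf c u \<in> L_fields U"
  proof (rule L_member[OF oU smooth_vf[OF oU sm] nb])
    have "(\<lambda>x. indicator U x *\<^sub>R divergence (vf c u) x) = (\<lambda>x. indicator U x *\<^sub>R dv c u x)"
      by (rule ext) (simp add: indicator_def dveq)
    then show "set_integrable lebesgue U (divergence (vf c u))"
      using si unfolding set_integrable_def by simp
    show "continuous_on U (divergence (vf c u))"
      using dvc by (rule continuous_on_eq) (simp add: dveq)
    have "divergence (vf c u) ` U \<subseteq> {-K..K}"
    proof
      fix y assume "y \<in> divergence (vf c u) ` U"
      then obtain x where x: "x \<in> U" "y = divergence (vf c u) x" by blast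
      then have "\<bar>y\<bar> \<le> K" using bd[OF x(1)] dveq[OF x(1)] unfolding K_def by simp
      then show "y \<in> {-K..K}" by (simp add: abs_le_iff)
    qed
    then show "bounded (divergence (vf c u) ` U)"
      by (rule bounded_subset[OF bounded_closed_interval])
  qed
qed

lemma conv_cutoff:
  fixes u :: "'a::euclidean_space \<Rightarrow> 'a" and f :: "'a \<Rightarrow> real"
  assumes oU: "open U" and uL: "u \<in> L_fields U" and un: "\<And>x. x \<in> U \<Longrightarrow> norm (u x) \<le> 1"
    and Bu: "\<And>x. x \<in> U \<Longrightarrow> \<bar>divergence u x\<bar> \<le> Bu"
    and B1: "\<And>s. 0 \<le> s \<Longrightarrow> \<bar>Dc 1 s\<bar> \<le> B1"
    and fi: "set_integrable lebesgue U f"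
  shows "(\<lambda>n. LINT x:U|lebesgue. f x * dv (inverse (real (Suc n))) u x) \<longlonglongrightarrow> (LINT x:U|lebesgue. f x * divergence u x)"
proof -
  define cn where "cn n = inverse (real (Suc n))" for n
  have cn0: "0 < cn n" "cn n \<le> 1" for n unfolding cn_def by (auto simp: field_simps)
  have cnlim: "cn \<longlonglongrightarrow> 0"
  proof -
    have "cn = (\<lambda>n. inverse (real (Suc n)))" by (rule ext) (simp add: cn_def)
    then show ?thesis using LIMSEQ_inverse_real_of_nat by simp
  qed
  have di: "set_integrable lebesgue U (divergence u)" using uL by (simp add: L_fields_def)
  have fm: "(\<lambda>x. indicator U x *\<^sub>R f x) \<in> borel_measurable lebesgue"
    using fi unfolding set_integrable_def by (rule borel_measurable_integrable)
  have dm: "(\<lambda>x. indicator U x *\<^sub>R divergence u x) \<in> borel_measurable lebesgue"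
    using di unfolding set_integrable_def by (rule borel_measurable_integrable)
  have dvm: "(\<lambda>x. indicator U x *\<^sub>R dv (cn n) u x) \<in> borel_measurable lebesgue" for n
    by (rule dv_props(5)[OF oU uL un Bu B1 cn0(1)])
  have eqs: "indicator U x *\<^sub>R (f x * g x) = (indicator U x *\<^sub>R f x) * (indicator U x *\<^sub>R g x)" for x and g :: "'a \<Rightarrow> real"
    by (simp add: indicator_def)
  have "(\<lambda>n. integral\<^sup>L lebesgue (\<lambda>x. indicator U x *\<^sub>R (f x * dv (cn n) u x)))
        \<longlonglongrightarrow> integral\<^sup>L lebesgue (\<lambda>x. indicator U x *\<^sub>R (f x * divergence u x))"
  proof (rule integral_dominated_convergence[where w="\<lambda>x. (Bu + 2 * B1) * \<bar>indicator U x *\<^sub>R f x\<bar>"])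
    show "(\<lambda>x. indicator U x *\<^sub>R (f x * divergence u x)) \<in> borel_measurable lebesgue"
      unfolding eqs using fm dm by (rule borel_measurable_times)
    show "(\<lambda>x. indicator U x *\<^sub>R (f x * dv (cn n) u x)) \<in> borel_measurable lebesgue" for n
      unfolding eqs using fm dvm by (rule borel_measurable_times)
    show "integrable lebesgue (\<lambda>x. (Bu + 2 * B1) * \<bar>indicator U x *\<^sub>R f x\<bar>)"
      using fi unfolding set_integrable_def by (intro integrable_mult_right integrable_abs)
    show "AE x in lebesgue. (\<lambda>n. indicator U x *\<^sub>R (f x * dv (cn n) u x)) \<longlonglongrightarrow> indicator U x *\<^sub>R (f x * divergence u x)"
    proof (rule AE_I2)
      fix x :: 'a
      have p: "(\<lambda>n. psi (cn n) x) \<longlonglongrightarrow> 1"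
      proof -
        have "(\<lambda>n. cn n * (x \<bullet> x)) \<longlonglongrightarrow> 0 * (x \<bullet> x)" by (intro tendsto_intros cnlim)
        then have "(\<lambda>n. Dc 0 (cn n * (x \<bullet> x))) \<longlonglongrightarrow> Dc 0 (0 * (x \<bullet> x))"
          by (rule isCont_tendsto_compose[OF Dc_cont])
        then show ?thesis by (simp add: psi_def Dc0_at0)
      qed
      have q: "(\<lambda>n. 2 * cn n * Dc 1 (cn n * (x \<bullet> x)) * (x \<bullet> u x)) \<longlonglongrightarrow> 2 * 0 * Dc 1 (0 * (x \<bullet> x)) * (x \<bullet> u x)"
      proof -
        have "(\<lambda>n. cn n * (x \<bullet> x)) \<longlonglongrightarrow> 0 * (x \<bullet> x)" by (intro tendsto_intros cnlim)
        then have "(\<lambda>n. Dc 1 (cn n * (x \<bullet> x))) \<longlonglongrightarrow> Dc 1 (0 * (x \<bullet> x))"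
          by (rule isCont_tendsto_compose[OF Dc_cont])
        then show ?thesis by (intro tendsto_intros cnlim)
      qed
      have "(\<lambda>n. dv (cn n) u x) \<longlonglongrightarrow> 1 * divergence u x + 2 * 0 * Dc 1 (0 * (x \<bullet> x)) * (x \<bullet> u x)"
        unfolding dv_def by (intro tendsto_add tendsto_mult p tendsto_const q)
      then have "(\<lambda>n. dv (cn n) u x) \<longlonglongrightarrow> divergence u x" by simp
      then show "(\<lambda>n. indicator U x *\<^sub>R (f x * dv (cn n) u x)) \<longlonglongrightarrow> indicator U x *\<^sub>R (f x * divergence u x)"
        by (intro tendsto_intros)
    qed
    show "AE x in lebesgue. norm (indicator U x *\<^sub>R (f x * dv (cn n) u x)) \<le> (Bu + 2 * B1) * \<bar>indicator U x *\<^sub>R f x\<bar>" for n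
    proof (rule AE_I2)
      fix x :: 'a
      show "norm (indicator U x *\<^sub>R (f x * dv (cn n) u x)) \<le> (Bu + 2 * B1) * \<bar>indicator U x *\<^sub>R f x\<bar>"
      proof (cases "x \<in> U")
        case True
        have "\<bar>dv (cn n) u x\<bar> \<le> Bu + 2 * B1 * max 1 (cn n)"
          by (rule dv_props(4)[OF oU uL un Bu B1 cn0(1) True])
        then have "\<bar>dv (cn n) u x\<bar> \<le> Bu + 2 * B1" using cn0[of n] by simp
        then have "\<bar>f x\<bar> * \<bar>dv (cn n) u x\<bar> \<le> \<bar>f x\<bar> * (Bu + 2 * B1)" by (intro mult_left_mono) auto
        then show ?thesis using True by (simp add: abs_mult mult.commute)
      next
        case False
        then show ?thesis by simp
      qed
    qed
  qed
  then show ?thesis unfolding set_lebesgue_integral_def cn_def by simp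
qed

lemma est_diff:
  fixes F f d :: "'a::euclidean_space \<Rightarrow> real"
  assumes Vs: "V \<in> sets lebesgue" and VU: "V \<subseteq> U"
    and Fi: "set_integrable lebesgue U F" and fi: "set_integrable lebesgue U f"
    and dm: "(\<lambda>x. indicator U x *\<^sub>R d x) \<in> borel_measurable lebesgue"
    and K: "0 \<le> K" and dK: "\<And>x. x \<in> U \<Longrightarrow> \<bar>d x\<bar> \<le> K"
    and d0: "\<And>x. x \<in> U \<Longrightarrow> x \<notin> V \<Longrightarrow> d x = 0"
  shows "\<bar>(LINT x:U|lebesgue. F x * d x) - (LINT x:U|lebesgue. f x * d x)\<bar>
           \<le> K * (LINT x:V|lebesgue. \<bar>F x - f x\<bar>)"
proof -
  have eqs: "indicator U x *\<^sub>R (g x * d x) = (indicator U x *\<^sub>R g x) * (indicator U x *\<^sub>R d x)" for x and g :: "'a \<Rightarrow> real"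
    by (simp add: indicator_def)
  have int_gd: "integrable lebesgue (\<lambda>x. indicator U x *\<^sub>R (g x * d x))"
    if gi: "set_integrable lebesgue U g" for g :: "'a \<Rightarrow> real"
  proof (rule Bochner_Integration.integrable_bound[where f="\<lambda>x. K * (indicator U x *\<^sub>R g x)"])
    show "integrable lebesgue (\<lambda>x. K * (indicator U x *\<^sub>R g x))"
      using gi unfolding set_integrable_def by (rule integrable_mult_right)
    have gm: "(\<lambda>x. indicator U x *\<^sub>R g x) \<in> borel_measurable lebesgue"
      using gi unfolding set_integrable_def by (rule borel_measurable_integrable)
    show "(\<lambda>x. indicator U x *\<^sub>R (g x * d x)) \<in> borel_measurable lebesgue"
      unfolding eqs using gm dm by (rule borel_measurable_times)
    have "\<bar>indicator U x *\<^sub>R (g x * d x)\<bar> \<le> \<bar>K * (indicator U x *\<^sub>R g x)\<bar>" for x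
    proof (cases "x \<in> U")
      case True
      have "\<bar>g x\<bar> * \<bar>d x\<bar> \<le> \<bar>g x\<bar> * K" using dK[OF True] by (intro mult_left_mono) auto
      then show ?thesis using True K by (simp add: abs_mult mult.commute)
    qed simp
    then show "AE x in lebesgue. norm (indicator U x *\<^sub>R (g x * d x)) \<le> norm (K * (indicator U x *\<^sub>R g x))"
      by simp
  qed
  have iV: "set_integrable lebesgue V (\<lambda>x. \<bar>F x - f x\<bar>)"
    by (rule set_integrable_subset[OF set_integrable_abs[OF set_integral_diff(1)[OF Fi fi]] Vs VU])
  have "(LINT x:U|lebesgue. F x * d x) - (LINT x:U|lebesgue. f x * d x)
      = integral\<^sup>L lebesgue (\<lambda>x. indicator U x *\<^sub>R (F x * d x) - indicator U x *\<^sub>R (f x * d x))"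
    unfolding set_lebesgue_integral_def
    by (rule Bochner_Integration.integral_diff[symmetric, OF int_gd[OF Fi] int_gd[OF fi]])
  also have "\<bar>\<dots>\<bar> \<le> integral\<^sup>L lebesgue (\<lambda>x. K * (indicator V x *\<^sub>R \<bar>F x - f x\<bar>))"
  proof (rule integral_abs_bound_integral)
    show "integrable lebesgue (\<lambda>x. indicator U x *\<^sub>R (F x * d x) - indicator U x *\<^sub>R (f x * d x))"
      by (intro Bochner_Integration.integrable_diff int_gd Fi fi)
    show "integrable lebesgue (\<lambda>x. K * (indicator V x *\<^sub>R \<bar>F x - f x\<bar>))"
      using iV unfolding set_integrable_def by (rule integrable_mult_right)
    fix x :: 'a
    show "\<bar>indicator U x *\<^sub>R (F x * d x) - indicator U x *\<^sub>R (f x * d x)\<bar> \<le> K * (indicator V x *\<^sub>R \<bar>F x - f x\<bar>)"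
    proof (cases "x \<in> V")
      case True
      then have xU: "x \<in> U" using VU by blast
      have "\<bar>F x - f x\<bar> * \<bar>d x\<bar> \<le> \<bar>F x - f x\<bar> * K" using dK[OF xU] by (intro mult_left_mono) auto
      moreover have "\<bar>indicator U x *\<^sub>R (F x * d x) - indicator U x *\<^sub>R (f x * d x)\<bar> = \<bar>F x - f x\<bar> * \<bar>d x\<bar>"
        using xU by (simp add: abs_mult[symmetric] left_diff_distrib)
      moreover have "K * (indicator V x *\<^sub>R \<bar>F x - f x\<bar>) = \<bar>F x - f x\<bar> * K"
        using True by simp
      ultimately show ?thesis by linarith
    next
      case False
      then show ?thesis using d0[of x] by (cases "x \<in> U") auto
    qed
  qed
  also have "\<dots> = K * (LINT x:V|lebesgue. \<bar>F x - f x\<bar>)"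
    unfolding set_lebesgue_integral_def by simp
  finally show ?thesis .
qed

theorem proposition3p11:
  fixes U :: "'a::euclidean_space set"
    and I :: "'i set" and R :: "'i \<Rightarrow> 'i \<Rightarrow> bool"
    and F :: "'i \<Rightarrow> 'a \<Rightarrow> real" and f :: "'a \<Rightarrow> real"
  assumes "open U"
    and "directed_set I R"
    and "\<forall>\<alpha>\<in>I. set_integrable lebesgue U (F \<alpha>)"
    and "set_integrable lebesgue U f"
    and "\<forall>V. V \<subseteq> U \<and> bounded V \<longrightarrow>
           (\<forall>e>0. \<exists>\<alpha>\<in>I. \<forall>\<beta>\<in>I. R \<alpha> \<beta> \<longrightarrow>
              (LINT x:V|lebesgue. \<bar>F \<beta> x - f x\<bar>) < e)"
  shows "BF_norm U f \<le> net_liminf I R (\<lambda>\<alpha>. BF_norm U (F \<alpha>))"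
proof -
  note oU = assms(1) and Fi = assms(3) and fi = assms(4) and conv = assms(5)
  obtain B1 where B1: "\<And>s. 0 \<le> s \<Longrightarrow> \<bar>Dc 1 s\<bar> \<le> B1" using Dc1_bound by blast
  have Ul: "U \<in> sets lebesgue" using oU by simp
  have BFge: "ereal (LINT x:U|lebesgue. g x * divergence v x) \<le> BF_norm U g"
    if "v \<in> L_fields U" "\<forall>x\<in>U. norm (v x) \<le> 1" for g v
    unfolding BF_norm_def by (rule SUP_upper) (use that in auto)
  have key: "ereal (LINT x:U|lebesgue. f x * divergence u x) \<le> net_liminf I R (\<lambda>\<alpha>. BF_norm U (F \<alpha>))"
    if uL: "u \<in> L_fields U" and un: "\<forall>x\<in>U. norm (u x) \<le> 1" for u
  proof (rule ereal_le_epsilon2)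
    fix \<epsilon> :: real assume \<epsilon>: "0 < \<epsilon>"
    have "bounded (divergence u ` U)" using uL by (simp add: L_fields_def)
    then obtain Bu where Bu0: "\<And>y. y \<in> divergence u ` U \<Longrightarrow> norm y \<le> Bu" unfolding bounded_iff by auto
    have Bu: "\<And>x. x \<in> U \<Longrightarrow> \<bar>divergence u x\<bar> \<le> Bu" using Bu0 by auto
    have un': "\<And>x. x \<in> U \<Longrightarrow> norm (u x) \<le> 1" using un by auto
    note cc = conv_cutoff[OF oU uL un' Bu B1 fi]
    obtain N where N: "\<bar>(LINT x:U|lebesgue. f x * dv (inverse (real (Suc N))) u x) - (LINT x:U|lebesgue. f x * divergence u x)\<bar> < \<epsilon> / 2"
      using LIMSEQ_D[OF cc, of "\<epsilon> / 2"] \<epsilon> by auto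
    define c where "c = inverse (real (Suc N))"
    have c: "0 < c" by (simp add: c_def)
    define v where "v = vf c u"
    note dp = dv_props[OF oU uL un' Bu B1 c]
    have vL: "v \<in> L_fields U" "\<forall>x\<in>U. norm (v x) \<le> 1" using dp(1,2) by (auto simp: v_def)
    have Iv: "(LINT x:U|lebesgue. g x * divergence v x) = (LINT x:U|lebesgue. g x * dv c u x)" for g
      by (rule set_lebesgue_integral_cong[OF Ul]) (simp add: v_def dp(3))
    define Rc where "Rc = max 1 (inverse c)"
    define V where "V = U \<inter> cball 0 Rc"
    define K where "K = \<bar>Bu + 2 * B1 * max 1 c\<bar> + 1"
    have K: "0 < K" by (simp add: K_def)
    have dK: "\<And>x. x \<in> U \<Longrightarrow> \<bar>dv c u x\<bar> \<le> K" using dp(4) unfolding K_def by fastforce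
    have d0: "\<And>x. x \<in> U \<Longrightarrow> x \<notin> V \<Longrightarrow> dv c u x = 0"
    proof -
      fix x assume "x \<in> U" "x \<notin> V"
      then have "norm x > Rc" by (simp add: V_def)
      then have "\<not> c * (x \<bullet> x) < 1" using ball_of_support[OF c, of x] by (auto simp: Rc_def)
      then show "dv c u x = 0" by (intro dv_zero) simp
    qed
    have VU: "V \<subseteq> U" and Vb: "bounded V" by (auto simp: V_def intro: bounded_subset[OF bounded_cball])
    have Vs: "V \<in> sets lebesgue" using oU by (simp add: V_def)
    obtain \<alpha> where \<alpha>: "\<alpha> \<in> I" and \<alpha>e: "\<And>\<beta>. \<beta> \<in> I \<Longrightarrow> R \<alpha> \<beta> \<Longrightarrow> (LINT x:V|lebesgue. \<bar>F \<beta> x - f x\<bar>) < \<epsilon> / (2 * K)"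
      using conv VU Vb \<epsilon> K by (metis divide_pos_pos mult_pos_pos zero_less_numeral)
    have "ereal ((LINT x:U|lebesgue. f x * divergence u x) - \<epsilon>) \<le> (INF \<beta>\<in>{b\<in>I. R \<alpha> b}. BF_norm U (F \<beta>))"
    proof (rule INF_greatest)
      fix \<beta> assume \<beta>: "\<beta> \<in> {b\<in>I. R \<alpha> b}"
      have sm: "(LINT x:V|lebesgue. \<bar>F \<beta> x - f x\<bar>) < \<epsilon> / (2 * K)" using \<alpha>e \<beta> by auto
      have est: "\<bar>(LINT x:U|lebesgue. F \<beta> x * dv c u x) - (LINT x:U|lebesgue. f x * dv c u x)\<bar>
           \<le> K * (LINT x:V|lebesgue. \<bar>F \<beta> x - f x\<bar>)"
        by (rule est_diff[OF Vs VU _ fi dp(5) _ dK d0]) (use Fi \<beta> K in auto)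
      have "K * (LINT x:V|lebesgue. \<bar>F \<beta> x - f x\<bar>) \<le> K * (\<epsilon> / (2 * K))"
        using sm K by (intro mult_left_mono) auto
      also have "\<dots> = \<epsilon> / 2" using K by simp
      finally have e2: "\<bar>(LINT x:U|lebesgue. F \<beta> x * dv c u x) - (LINT x:U|lebesgue. f x * dv c u x)\<bar> \<le> \<epsilon> / 2"
        using est by linarith
      have "(LINT x:U|lebesgue. f x * divergence u x) - \<epsilon> \<le> (LINT x:U|lebesgue. F \<beta> x * divergence v x)"
        using e2 N unfolding Iv c_def by linarith
      then have "ereal ((LINT x:U|lebesgue. f x * divergence u x) - \<epsilon>) \<le> ereal (LINT x:U|lebesgue. F \<beta> x * divergence v x)"
        by simp
      also have "\<dots> \<le> BF_norm U (F \<beta>)" by (rule BFge[OF vL])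
      finally show "ereal ((LINT x:U|lebesgue. f x * divergence u x) - \<epsilon>) \<le> BF_norm U (F \<beta>)" .
    qed
    also have "\<dots> \<le> net_liminf I R (\<lambda>\<alpha>. BF_norm U (F \<alpha>))"
      unfolding net_liminf_def using \<alpha> by (rule SUP_upper)
    finally have "ereal ((LINT x:U|lebesgue. f x * divergence u x) - \<epsilon>) \<le> net_liminf I R (\<lambda>\<alpha>. BF_norm U (F \<alpha>))" .
    then have "ereal ((LINT x:U|lebesgue. f x * divergence u x) - \<epsilon>) + ereal \<epsilon> \<le> net_liminf I R (\<lambda>\<alpha>. BF_norm U (F \<alpha>)) + ereal \<epsilon>"
      by (rule add_right_mono)
    then show "ereal (LINT x:U|lebesgue. f x * divergence u x) \<le> net_liminf I R (\<lambda>\<alpha>. BF_norm U (F \<alpha>)) + ereal \<epsilon>"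
      by simp
  qed
  show ?thesis
    unfolding BF_norm_def[of U f] by (rule SUP_least) (use key in auto)
qed

end
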